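(* Let $G$ be a finite loopless multigraph and let $p$ be a positive integer. Then $$({\rm Arb}_p(G))^p\ \ge\ \max\{{\rm Arb}(H): H \text{ a loopless multigraph such that } G \text{ contains a } \le(p-1)\text{-subdivision of } H \text{ as a subgraph}\}\ \ge\ \widetilde\nabla^{\rm m}_{(p-1)/2}(G).$$
   Context: All multigraphs are finite and loopless; a cycle of length $2$ is formed by two parallel edges, and $|C|$ denotes the number of edges of a cycle $C$. ${\rm Arb}(H)$ is the minimum number of forests into which the edge set of $H$ can be partitioned. ${\rm Arb}_p(G)$ is the minimum number of colours in an edge colouring of $G$ such that every cycle $C$ of $G$ receives at least $\min(|C|,p+1)$ distinct colours. For a non-negative integer $k$, a $\le k$-subdivision of a multigraph $H$ is obtained by replacing each edge of $H$ (each parallel copy separately) by a path with at most $k$ internal vertices, the paths being internally vertex-disjoint and avoiding the vertices of $H$. For a half-integer $r\ge 0$, $\widetilde\nabla^{\rm m}_r(G)$ is the maximum of $\|H\|/|H|$ over all loopless multigraphs $H$ (with $|H|\ge 1$) such that some $\le 2r$-subdivision of $H$ is a subgraph of $G$, where $\|H\|$ counts edges with multiplicity. *)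

theory Defs
  imports Main "HOL.Real"
begin

text \<open>Finite loopless multigraphs: vertices, edges (with identity, so parallel
edges are distinct elements of the edge set), and an endpoint map.\<close>

record ('v, 'e) mgraph =
  verts :: "'v set"
  edges :: "'e set"
  ends  :: "'e \<Rightarrow> 'v set"

definition mgraph :: "('v, 'e) mgraph \<Rightarrow> bool" where
  "mgraph G \<longleftrightarrow> finite (verts G) \<and> finite (edges G) \<and>
     (\<forall>e\<in>edges G. ends G e \<subseteq> verts G \<and> card (ends G e) = 2)"

text \<open>Edge set of a cycle: distinct vertices v_0..v_(k-1) and distinct edges
e_0..e_(k-1), k >= 2, e_i joining v_i and v_(i+1 mod k).  Length-2 cycles are
pairs of parallel edges.  |C| = card C.\<close>

definition is_cycle :: "('v, 'e) mgraph \<Rightarrow> 'e set \<Rightarrow> bool" where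
  "is_cycle G C \<longleftrightarrow> (\<exists>vs es. length vs = length es \<and> length es \<ge> 2 \<and>
     distinct vs \<and> distinct es \<and> set es \<subseteq> edges G \<and> set vs \<subseteq> verts G \<and>
     (\<forall>i<length es. ends G (es ! i) = {vs ! i, vs ! ((i + 1) mod length es)}) \<and>
     C = set es)"

definition arb :: "('v, 'e) mgraph \<Rightarrow> nat" where
  "arb H = (LEAST k. \<exists>c :: 'e \<Rightarrow> nat. (\<forall>e\<in>edges H. c e < k) \<and>
     (\<forall>i. \<not> (\<exists>C. is_cycle H C \<and> C \<subseteq> {e \<in> edges H. c e = i})))"

definition arb_p :: "('v, 'e) mgraph \<Rightarrow> nat \<Rightarrow> nat" where
  "arb_p G p = (LEAST k. \<exists>c :: 'e \<Rightarrow> nat. (\<forall>e\<in>edges G. c e < k) \<and>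
     (\<forall>C. is_cycle G C \<longrightarrow> card (c ` C) \<ge> min (card C) (p + 1)))"

definition is_path :: "('v, 'e) mgraph \<Rightarrow> 'v list \<Rightarrow> 'e list \<Rightarrow> bool" where
  "is_path G vs es \<longleftrightarrow> length vs = length es + 1 \<and> distinct vs \<and> distinct es \<and>
     set es \<subseteq> edges G \<and> set vs \<subseteq> verts G \<and>
     (\<forall>i<length es. ends G (es ! i) = {vs ! i, vs ! (i + 1)})"

definition internal :: "'v list \<Rightarrow> 'v set" where
  "internal vs = set (butlast (tl vs))"

definition has_subdiv :: "('v, 'e) mgraph \<Rightarrow> nat \<Rightarrow> ('a, 'b) mgraph \<Rightarrow> bool" where
  "has_subdiv G k H \<longleftrightarrow> (\<exists>(\<phi> :: 'a \<Rightarrow> 'v) (P :: 'b \<Rightarrow> 'v list \<times> 'e list).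
     inj_on \<phi> (verts H) \<and> \<phi> ` verts H \<subseteq> verts G \<and>
     (\<forall>e\<in>edges H. is_path G (fst (P e)) (snd (P e)) \<and>
        {hd (fst (P e)), last (fst (P e))} = \<phi> ` ends H e \<and>
        length (fst (P e)) \<le> k + 2 \<and>
        internal (fst (P e)) \<inter> \<phi> ` verts H = {}) \<and>
     (\<forall>e\<in>edges H. \<forall>f\<in>edges H. e \<noteq> f \<longrightarrow>
        internal (fst (P e)) \<inter> set (fst (P f)) = {} \<and>
        set (snd (P e)) \<inter> set (snd (P f)) = {}))"

text \<open>Multigraphs H are represented with vertex and edge type nat; this loses
nothing since G is finite, so every such H is finite and has an isomorphic copy
over nat.\<close>

definition max_arb_subdiv :: "('v, 'e) mgraph \<Rightarrow> nat \<Rightarrow> nat" where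
  "max_arb_subdiv G k = Max {arb H | H :: (nat, nat) mgraph. mgraph H \<and> has_subdiv G k H}"

text \<open>nabla^m_r(G) with the parameter k = 2r (a natural number).  The 0 only
matters when G has no vertex (empty maximum).\<close>

definition nabla_m :: "('v, 'e) mgraph \<Rightarrow> nat \<Rightarrow> real" where
  "nabla_m G k = Max (insert 0 {real (card (edges H)) / real (card (verts H)) |
      H :: (nat, nat) mgraph. mgraph H \<and> verts H \<noteq> {} \<and> has_subdiv G k H})"

end

theory Submission imports Defs begin

definition noleaf :: "('v, 'e) mgraph \<Rightarrow> 'e set \<Rightarrow> bool" where
  "noleaf G F \<longleftrightarrow> (\<forall>f\<in>F. \<forall>w\<in>ends G f. \<exists>f'\<in>F. f' \<noteq> f \<and> w \<in> ends G f')"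

lemma card2_other: "card A = 2 \<Longrightarrow> v \<in> A \<Longrightarrow> \<exists>x. x \<noteq> v \<and> A = {v, x}"
  by (auto simp: card_2_iff)

lemma L_aux:
  assumes "mgraph G" "F \<subseteq> edges G" "finite F" "noleaf G F" "is_path G vs es" "set es \<subseteq> F" "es \<noteq> []"
  shows "\<exists>C. is_cycle G C \<and> C \<subseteq> F"
  using assms
proof (induction "card F - length es" arbitrary: vs es rule: less_induct)
  case less
  define n where "n = length es"
  have P: "length vs = n + 1" "distinct vs" "distinct es" "set es \<subseteq> edges G" "set vs \<subseteq> verts G"
    "\<And>i. i < n \<Longrightarrow> ends G (es ! i) = {vs ! i, vs ! (i + 1)}"
    using less.prems(5) unfolding is_path_def n_def by auto
  have n1: "n \<ge> 1" using less.prems(7) n_def by (cases es) auto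
  have "es ! (n-1) \<in> F" using less.prems(6) n1 n_def by auto
  moreover have "vs ! n \<in> ends G (es ! (n-1))" using P(6)[of "n-1"] n1 by auto
  ultimately obtain f' where f': "f' \<in> F" "f' \<noteq> es ! (n-1)" "vs ! n \<in> ends G f'"
    using less.prems(4) unfolding noleaf_def by blast
  have "card (ends G f') = 2" using f'(1) less.prems(1,2) unfolding mgraph_def by auto
  then obtain x where x: "x \<noteq> vs ! n" "ends G f' = {vs ! n, x}" using card2_other f'(3) by metis
  have xv: "x \<in> verts G" using f'(1) less.prems(1,2) x unfolding mgraph_def by auto
  have fnot: "f' \<notin> set es"
  proof
    assume "f' \<in> set es"
    then obtain m where m: "m < n" "f' = es ! m" by (auto simp: in_set_conv_nth n_def)
    then have "vs ! n \<in> {vs ! m, vs ! (m+1)}" using P(6) f'(3) by auto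
    then have "n = m \<or> n = m + 1" using P(1,2) m by (auto simp: nth_eq_iff_index_eq)
    then show False using m f'(2) by auto
  qed
  show ?case
  proof (cases "x \<in> set vs")
    case True
    then obtain j where j: "j < n + 1" "vs ! j = x" using P(1) by (auto simp: in_set_conv_nth)
    have jn: "j < n" using j x(1) by (cases "j = n") auto
    define vs' where "vs' = drop j vs"
    define es' where "es' = drop j es @ [f']"
    have lv: "length vs' = n - j + 1" "length es' = n - j + 1"
      using P(1) jn unfolding vs'_def es'_def n_def by auto
    have "is_cycle G (set es')"
      unfolding is_cycle_def
    proof (intro exI[of _ vs'] exI[of _ es'] conjI allI impI)
      show "length vs' = length es'" using lv by simp
      show "2 \<le> length es'" using lv jn by simp
      show "distinct vs'" using P(2) vs'_def by simp
      show "distinct es'" using P(3) fnot es'_def by (auto dest: in_set_dropD)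
      show "set es' \<subseteq> edges G" using P(4) f'(1) less.prems(2) es'_def by (auto dest: in_set_dropD)
      show "set vs' \<subseteq> verts G" using P(5) vs'_def by (auto dest: in_set_dropD)
      fix i assume i: "i < length es'"
      show "ends G (es' ! i) = {vs' ! i, vs' ! ((i + 1) mod length es')}"
      proof (cases "i < n - j")
        case True
        then have "es' ! i = es ! (j + i)" using n_def unfolding es'_def by (simp add: nth_append)
        moreover have "(i + 1) mod length es' = i + 1" using True lv by simp
        ultimately show ?thesis using P(1) P(6)[of "j+i"] True unfolding vs'_def by simp
      next
        case False
        then have ii: "i = n - j" using i lv by simp
        then have "es' ! i = f'" using n_def unfolding es'_def by (simp add: nth_append)
        moreover have "(i + 1) mod length es' = 0" using ii lv by simp
        ultimately show ?thesis using P(1) ii x(2) j jn unfolding vs'_def by (auto)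
      qed
    qed simp
    moreover have "set es' \<subseteq> F" using less.prems(6) f'(1) es'_def by (auto dest: in_set_dropD)
    ultimately show ?thesis by blast
  next
    case False
    have path: "is_path G (vs @ [x]) (es @ [f'])"
      unfolding is_path_def
    proof (intro conjI allI impI)
      fix i assume i: "i < length (es @ [f'])"
      show "ends G ((es @ [f']) ! i) = {(vs @ [x]) ! i, (vs @ [x]) ! (i + 1)}"
      proof (cases "i < n")
        case True then show ?thesis using P(1,6) n_def by (simp add: nth_append)
      next
        case False then have "i = n" using i n_def by simp
        then show ?thesis using P(1) x(2) n_def by (simp add: nth_append)
      qed
    qed (use P False fnot f'(1) less.prems(2) xv n_def in auto)
    have "card (insert f' (set es)) \<le> card F" using less.prems(3,6) f'(1) by (intro card_mono) auto
    then have "n < card F" using fnot n_def distinct_card[OF P(3)] by simp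
    then have "card F - length (es @ [f']) < card F - length es" using n_def by simp
    from less.hyps[OF this less.prems(1-4) path] show ?thesis using less.prems(6) f'(1) by auto
  qed
qed


lemma L:
  assumes "mgraph G" "F \<subseteq> edges G" "noleaf G F" "F \<noteq> {}"
  shows "\<exists>C. is_cycle G C \<and> C \<subseteq> F"
proof -
  have fin: "finite F" using assms(1,2) finite_subset unfolding mgraph_def by blast
  obtain f where f: "f \<in> F" using assms(4) by blast
  then have "card (ends G f) = 2" "ends G f \<subseteq> verts G" using assms(1,2) unfolding mgraph_def by auto
  then obtain a b where ab: "a \<noteq> b" "ends G f = {a, b}" "a \<in> verts G" "b \<in> verts G"
    by (auto simp: card_2_iff)
  have "is_path G [a, b] [f]" unfolding is_path_def using ab f assms(2) by auto
  from L_aux[OF assms(1,2) fin assms(3) this] f show ?thesis by auto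
qed

lemma cycle_card: "is_cycle G C \<Longrightarrow> card C \<ge> 2 \<and> finite C \<and> C \<subseteq> edges G"
  unfolding is_cycle_def by (auto simp: distinct_card)

lemma cycle_noleaf:
  assumes "is_cycle G C" shows "noleaf G C"
proof -
  obtain vs es where c: "length vs = length es" "length es \<ge> 2" "distinct vs" "distinct es"
    "\<And>i. i<length es \<Longrightarrow> ends G (es ! i) = {vs ! i, vs ! ((i + 1) mod length es)}" "C = set es"
    using assms unfolding is_cycle_def by blast
  define n where "n = length es"
  show ?thesis unfolding noleaf_def
  proof (intro ballI)
    fix f w assume f: "f \<in> C" and w: "w \<in> ends G f"
    then obtain i where i: "i < n" "f = es ! i" using c(6) by (auto simp: in_set_conv_nth n_def)
    have "w = vs ! i \<or> w = vs ! ((i+1) mod n)" using c(5) i w n_def by auto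
    then show "\<exists>f'\<in>C. f' \<noteq> f \<and> w \<in> ends G f'"
    proof
      assume wi: "w = vs ! i"
      define j where "j = (if i = 0 then n - 1 else i - 1)"
      have j: "j < n" "j \<noteq> i" "(j + 1) mod n = i" using i c(2) n_def unfolding j_def by auto
      have "es ! j \<noteq> es ! i" using j i c(4) n_def by (simp add: nth_eq_iff_index_eq)
      moreover have "w \<in> ends G (es ! j)" using c(5)[of j] j wi n_def by auto
      ultimately show ?thesis using c(6) j i n_def by auto
    next
      assume wi: "w = vs ! ((i+1) mod n)"
      define j where "j = (i+1) mod n"
      have j: "j < n" "j \<noteq> i" using i c(2) n_def unfolding j_def
        by (auto simp: mod_Suc)
      have "es ! j \<noteq> es ! i" using j i c(4) n_def by (simp add: nth_eq_iff_index_eq)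
      moreover have "w \<in> ends G (es ! j)" using c(5)[of j] j wi n_def j_def by auto
      ultimately show ?thesis using c(6) j i n_def by auto
    qed
  qed
qed

lemma forest_bound:
  assumes "mgraph G" "F \<subseteq> edges G" "\<not> (\<exists>C. is_cycle G C \<and> C \<subseteq> F)"
    "\<forall>f\<in>F. ends G f \<subseteq> V" "finite V"
  shows "card F \<le> card V"
  using assms
proof (induction "card F" arbitrary: F V rule: less_induct)
  case less
  show ?case
  proof (cases "F = {}")
    case True then show ?thesis by simp
  next
    case False
    have fin: "finite F" using less.prems(1,2) unfolding mgraph_def by (meson finite_subset)
    have "\<not> noleaf G F"
    proof
      assume "noleaf G F"
      from L[OF less.prems(1,2) this False] less.prems(3) show False by simp
    qed
    then obtain f w where fw: "f \<in> F" "w \<in> ends G f" "\<forall>f'\<in>F. f' \<noteq> f \<longrightarrow> w \<notin> ends G f'"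
      unfolding noleaf_def by blast
    have wV: "w \<in> V" using fw less.prems(4) by auto
    have "card F \<noteq> 0" using fin fw by auto
    then have cF: "card F \<ge> 1" by simp
    have "card (F - {f}) \<le> card (V - {w})"
    proof (rule less.hyps)
      show "card (F - {f}) < card F" using cF fin fw by simp
      show "F - {f} \<subseteq> edges G" using less.prems(2) by blast
      show "\<not> (\<exists>C. is_cycle G C \<and> C \<subseteq> F - {f})"
      proof
        assume "\<exists>C. is_cycle G C \<and> C \<subseteq> F - {f}"
        then obtain C where "is_cycle G C" "C \<subseteq> F" by auto
        then show False using less.prems(3) by auto
      qed
      show "\<forall>f'\<in>F - {f}. ends G f' \<subseteq> V - {w}" using less.prems(4) fw by blast
      show "finite (V - {w})" using less.prems(5) by simp
    qed (rule less.prems(1))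
    moreover have "card (F - {f}) = card F - 1" using fin fw by simp
    moreover have "card (V - {w}) = card V - 1" using wV by simp
    moreover have "card V \<noteq> 0" using wV less.prems(5) by auto
    moreover note cF
    ultimately show ?thesis by linarith
  qed
qed


definition arbP :: "('v, 'e) mgraph \<Rightarrow> nat \<Rightarrow> bool" where
  "arbP H k \<longleftrightarrow> (\<exists>c :: 'e \<Rightarrow> nat. (\<forall>e\<in>edges H. c e < k) \<and>
     (\<forall>i. \<not> (\<exists>C. is_cycle H C \<and> C \<subseteq> {e \<in> edges H. c e = i})))"

lemma arb_eq: "arb H = (LEAST k. arbP H k)"
  unfolding arb_def arbP_def by simp

lemma arbP_card:
  assumes "mgraph H" shows "arbP H (card (edges H))"
proof -
  have fin: "finite (edges H)" using assms unfolding mgraph_def by simp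
  obtain g where g: "bij_betw g (edges H) {0..<card (edges H)}" using ex_bij_betw_finite_nat[OF fin] by blast
  show ?thesis unfolding arbP_def
  proof (intro exI[of _ g] conjI allI ballI notI)
    fix e assume "e \<in> edges H" then show "g e < card (edges H)" using g bij_betw_apply by fastforce
  next
    fix i assume "\<exists>C. is_cycle H C \<and> C \<subseteq> {e \<in> edges H. g e = i}"
    then obtain C where C: "is_cycle H C" "C \<subseteq> {e \<in> edges H. g e = i}" by blast
    have "\<forall>a1\<in>C. \<forall>a2\<in>C. a1 = a2" using C(2) g unfolding bij_betw_def inj_on_def by blast
    then have "card C \<le> Suc 0" using card_le_Suc0_iff_eq cycle_card[OF C(1)] by blast
    then show False using cycle_card[OF C(1)] by simp
  qed
qed

lemma arb_props:
  assumes "mgraph H" shows "arbP H (arb H)" "arb H \<le> card (edges H)"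
  using arbP_card[OF assms] unfolding arb_eq by (auto intro: LeastI Least_le)

lemma arb_lower:
  assumes "mgraph H" shows "card (edges H) \<le> arb H * card (verts H)"
proof -
  obtain c where c: "\<forall>e\<in>edges H. c e < arb H"
    "\<forall>i. \<not> (\<exists>C. is_cycle H C \<and> C \<subseteq> {e \<in> edges H. c e = i})"
    using arb_props(1)[OF assms] unfolding arbP_def by blast
  define K where "K i = {e \<in> edges H. c e = i}" for i
  have "edges H = (\<Union>i\<in>{..<arb H}. K i)" using c(1) unfolding K_def by auto
  then have "card (edges H) \<le> (\<Sum>i\<in>{..<arb H}. card (K i))" using card_UN_le[of "{..<arb H}" K] by simp
  also have "\<dots> \<le> of_nat (card {..<arb H}) * card (verts H)"
  proof (rule sum_bounded_above)
    fix i
    show "card (K i) \<le> card (verts H)"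
      apply (rule forest_bound[OF assms])
      using c(2) assms unfolding K_def mgraph_def by auto
  qed
  finally show ?thesis by simp
qed


lemma path_nonempty: "is_path G vs es \<Longrightarrow> card {hd vs, last vs} = 2 \<Longrightarrow> es \<noteq> []"
  unfolding is_path_def by (cases vs) auto

lemma subdiv_ne:
  assumes "mgraph H" "inj_on \<phi> (verts H)"
    "\<forall>e\<in>edges H. is_path G (fst (P e)) (snd (P e)) \<and>
        {hd (fst (P e)), last (fst (P e))} = \<phi> ` ends H e \<and> Q e" "e \<in> edges H"
  shows "snd (P e) \<noteq> []"
proof -
  have "card (\<phi> ` ends H e) = 2" using assms(1,2,4) unfolding mgraph_def
    by (metis card_image inj_on_subset)
  moreover have "is_path G (fst (P e)) (snd (P e))" "{hd (fst (P e)), last (fst (P e))} = \<phi> ` ends H e"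
    using assms(3,4) by auto
  ultimately show ?thesis using path_nonempty by metis
qed

lemma subdiv_cards:
  assumes "mgraph G" "mgraph H" "has_subdiv G k H"
  shows "card (edges H) \<le> card (edges G)" "card (verts H) \<le> card (verts G)"
proof -
  obtain \<phi> P where h0: "inj_on \<phi> (verts H)" "\<phi> ` verts H \<subseteq> verts G"
     "(\<forall>e\<in>edges H. is_path G (fst (P e)) (snd (P e)) \<and>
        {hd (fst (P e)), last (fst (P e))} = \<phi> ` ends H e \<and>
        length (fst (P e)) \<le> k + 2 \<and>
        internal (fst (P e)) \<inter> \<phi> ` verts H = {})"
     "(\<forall>e\<in>edges H. \<forall>f\<in>edges H. e \<noteq> f \<longrightarrow>
        internal (fst (P e)) \<inter> set (fst (P f)) = {} \<and>
        set (snd (P e)) \<inter> set (snd (P f)) = {})"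
    using assms(3) unfolding has_subdiv_def by (elim exE conjE) blast
  have h: "inj_on \<phi> (verts H)" "\<phi> ` verts H \<subseteq> verts G"
    "\<And>e. e\<in>edges H \<Longrightarrow> is_path G (fst (P e)) (snd (P e)) \<and> snd (P e) \<noteq> []"
    "\<And>e f. e\<in>edges H \<Longrightarrow> f\<in>edges H \<Longrightarrow> e \<noteq> f \<Longrightarrow> set (snd (P e)) \<inter> set (snd (P f)) = {}"
    using h0(1) apply assumption
    using h0(2) apply assumption
    using h0(3) subdiv_ne[OF assms(2) h0(1,3)] apply blast
    using h0(4) by blast
  have "inj_on (\<lambda>e. hd (snd (P e))) (edges H)"
  proof (rule inj_onI, rule ccontr)
    fix e f assume ef: "e \<in> edges H" "f \<in> edges H" "hd (snd (P e)) = hd (snd (P f))" "e \<noteq> f"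
    have "hd (snd (P e)) \<in> set (snd (P e))" using h(3)[OF ef(1)] by simp
    moreover have "hd (snd (P f)) \<in> set (snd (P f))" using h(3)[OF ef(2)] by simp
    ultimately show False using h(4)[OF ef(1,2,4)] ef(3) by auto
  qed
  moreover have "(\<lambda>e. hd (snd (P e))) ` edges H \<subseteq> edges G"
  proof
    fix x assume "x \<in> (\<lambda>e. hd (snd (P e))) ` edges H"
    then obtain e where e: "e \<in> edges H" "x = hd (snd (P e))" by blast
    then have "x \<in> set (snd (P e))" "set (snd (P e)) \<subseteq> edges G"
      using h(3)[OF e(1)] unfolding is_path_def by auto
    then show "x \<in> edges G" by blast
  qed
  ultimately show "card (edges H) \<le> card (edges G)"
    using assms(1) unfolding mgraph_def by (meson card_inj_on_le)
  show "card (verts H) \<le> card (verts G)"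
    using h(1,2) assms(1) unfolding mgraph_def by (meson card_inj_on_le)
qed

lemma max_arb_ge:
  assumes "mgraph G" "mgraph (H :: (nat, nat) mgraph)" "has_subdiv G k H"
  shows "arb H \<le> max_arb_subdiv G k"
proof -
  have "{arb H | H :: (nat, nat) mgraph. mgraph H \<and> has_subdiv G k H} \<subseteq> {..card (edges G)}"
    using arb_props(2) subdiv_cards(1)[OF assms(1)] by fastforce
  then have "finite {arb H | H :: (nat, nat) mgraph. mgraph H \<and> has_subdiv G k H}"
    using finite_subset by blast
  then show ?thesis unfolding max_arb_subdiv_def using assms(2,3) by (intro Max_ge) auto
qed

lemma part2:
  assumes "mgraph G"
  shows "nabla_m G k \<le> real (max_arb_subdiv G k)"
proof -
  let ?B = "{real (card (edges H)) / real (card (verts H)) |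
      H :: (nat, nat) mgraph. mgraph H \<and> verts H \<noteq> {} \<and> has_subdiv G k H}"
  have "?B \<subseteq> (\<lambda>(a, b). real a / real b) ` ({..card (edges G)} \<times> {..card (verts G)})"
  proof
    fix x assume "x \<in> ?B"
    then obtain H :: "(nat, nat) mgraph" where H: "mgraph H" "has_subdiv G k H"
      "x = real (card (edges H)) / real (card (verts H))" by blast
    then show "x \<in> (\<lambda>(a, b). real a / real b) ` ({..card (edges G)} \<times> {..card (verts G)})"
      using subdiv_cards[OF assms H(1,2)] by force
  qed
  then have fin: "finite (insert 0 ?B)" using finite_subset by blast
  show ?thesis unfolding nabla_m_def
  proof (rule Max.boundedI[OF fin])
    fix x assume "x \<in> insert 0 ?B"
    then show "x \<le> real (max_arb_subdiv G k)"
    proof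
      assume "x = 0" then show ?thesis by simp
    next
      assume "x \<in> ?B"
      then obtain H :: "(nat, nat) mgraph" where H: "mgraph H" "has_subdiv G k H" "verts H \<noteq> {}"
        "x = real (card (edges H)) / real (card (verts H))" by blast
      have vpos: "real (card (verts H)) > 0" using H(1,3) unfolding mgraph_def by auto
      have "real (card (edges H)) \<le> real (arb H) * real (card (verts H))"
        using arb_lower[OF H(1)] by (metis of_nat_le_iff of_nat_mult)
      then have "x \<le> real (arb H)" using H(4) vpos by (simp add: divide_le_eq)
      also have "\<dots> \<le> real (max_arb_subdiv G k)" using max_arb_ge[OF assms H(1,2)] by simp
      finally show ?thesis .
    qed
  qed simp
qed


lemma path_ends_sub: "is_path G vs es \<Longrightarrow> f \<in> set es \<Longrightarrow> ends G f \<subseteq> set vs"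
proof
  fix x assume a: "is_path G vs es" "f \<in> set es" "x \<in> ends G f"
  then obtain i where i: "i < length es" "f = es ! i" by (auto simp: in_set_conv_nth)
  have "length vs = length es + 1" "ends G (es ! i) = {vs ! i, vs ! (i + 1)}"
    using a(1) i(1) unfolding is_path_def by auto
  then show "x \<in> set vs" using a(3) i by auto
qed

lemma path_internal: "is_path G vs es \<Longrightarrow> 0 < t \<Longrightarrow> t < length es \<Longrightarrow> vs ! t \<in> internal vs"
  unfolding is_path_def internal_def
proof -
  assume a: "length vs = length es + 1 \<and> distinct vs \<and> distinct es \<and> set es \<subseteq> edges G \<and> set vs \<subseteq> verts G \<and>
     (\<forall>i<length es. ends G (es ! i) = {vs ! i, vs ! (i + 1)})" "0 < t" "t < length es"
  then have "butlast (tl vs) ! (t - 1) = vs ! t" by (simp add: nth_butlast nth_tl)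
  moreover have "t - 1 < length (butlast (tl vs))" using a by simp
  ultimately show "vs ! t \<in> set (butlast (tl vs))" by (metis nth_mem)
qed

lemma path_edge_at:
  assumes "is_path G vs es" "m < length es" "vs ! t \<in> ends G (es ! m)" "t < length vs"
  shows "t = m \<or> t = m + 1"
proof -
  have "ends G (es ! m) = {vs ! m, vs ! (m+1)}" "distinct vs" "length vs = length es + 1"
    using assms(1,2) unfolding is_path_def by auto
  then show ?thesis using assms(2-4) by (auto simp: nth_eq_iff_index_eq)
qed

lemma path_endpoint_edge:
  assumes "is_path G vs es" "es \<noteq> []" "w \<in> {hd vs, last vs}"
  shows "\<exists>f\<in>set es. w \<in> ends G f"
proof -
  have P: "length vs = length es + 1" "\<And>i. i<length es \<Longrightarrow> ends G (es ! i) = {vs ! i, vs ! (i + 1)}"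
    using assms(1) unfolding is_path_def by auto
  have ne: "vs \<noteq> []" using P(1) by auto
  have "w = vs ! 0 \<or> w = vs ! length es" using assms(3) ne P(1) by (auto simp: hd_conv_nth last_conv_nth)
  then show ?thesis
  proof
    assume "w = vs ! 0" then show ?thesis using P(2)[of 0] assms(2) by (intro bexI[of _ "es ! 0"]) auto
  next
    assume w: "w = vs ! length es"
    have "ends G (es ! (length es - 1)) = {vs ! (length es - 1), vs ! length es}"
      using P(2)[of "length es - 1"] assms(2) by simp
    then show ?thesis using w assms(2) by (intro bexI[of _ "es ! (length es - 1)"]) auto
  qed
qed

lemma propagate:
  assumes path: "is_path G vs es" and nl: "noleaf G C'" and sub: "C' \<subseteq> U" and fin: "finite C'"
    and deg: "\<And>t f. 0 < t \<Longrightarrow> t < length es \<Longrightarrow> f \<in> U \<Longrightarrow> vs ! t \<in> ends G f \<Longrightarrow> f = es ! (t - 1) \<or> f = es ! t"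
    and j: "j < length es" "es ! j \<in> C'"
  shows "length es + 1 \<le> card C'"
proof -
  have P: "length vs = length es + 1" "distinct vs" "distinct es"
    "\<And>i. i<length es \<Longrightarrow> ends G (es ! i) = {vs ! i, vs ! (i + 1)}"
    using path unfolding is_path_def by auto
  have fwd: "j + m < length es \<Longrightarrow> es ! (j + m) \<in> C'" for m
  proof (induction m)
    case 0 then show ?case using j by simp
  next
    case (Suc m)
    then have in1: "es ! (j + m) \<in> C'" by simp
    define t where "t = j + m + 1"
    have "vs ! t \<in> ends G (es ! (j + m))" using P(4)[of "j+m"] Suc.prems t_def by simp
    then obtain f' where f': "f' \<in> C'" "f' \<noteq> es ! (j + m)" "vs ! t \<in> ends G f'"
      using nl in1 unfolding noleaf_def by blast
    have "f' = es ! (t - 1) \<or> f' = es ! t" using deg[of t f'] f' sub Suc.prems t_def by auto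
    then have "f' = es ! t" using f'(2) t_def by auto
    then show ?case using f'(1) t_def by simp
  qed
  have bwd: "m \<le> j \<Longrightarrow> es ! (j - m) \<in> C'" for m
  proof (induction m)
    case 0 then show ?case using j by simp
  next
    case (Suc m)
    then have in1: "es ! (j - m) \<in> C'" by simp
    define t where "t = j - m"
    have t: "0 < t" "t < length es" using Suc.prems j t_def by auto
    have "vs ! t \<in> ends G (es ! t)" using P(4)[of t] t by simp
    then obtain f' where f': "f' \<in> C'" "f' \<noteq> es ! t" "vs ! t \<in> ends G f'"
      using nl in1 t_def unfolding noleaf_def by blast
    have "f' = es ! (t - 1) \<or> f' = es ! t" using deg[of t f'] f' sub t by auto
    then have "f' = es ! (t - 1)" using f'(2) by auto
    moreover have "t - 1 = j - Suc m" using t_def Suc.prems by simp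
    ultimately show ?case using f'(1) by simp
  qed
  have all: "set es \<subseteq> C'"
  proof
    fix x assume "x \<in> set es"
    then obtain i where i: "i < length es" "x = es ! i" by (auto simp: in_set_conv_nth)
    show "x \<in> C'"
    proof (cases "j \<le> i")
      case True then show ?thesis using fwd[of "i - j"] i by simp
    next
      case False then show ?thesis using bwd[of "j - i"] i by simp
    qed
  qed
  have l0: "0 < length es" using j(1) by linarith
  then have "es ! 0 \<in> set es" by (rule nth_mem)
  then have e0: "es ! 0 \<in> C'" using all by blast
  have "vs ! 0 \<in> ends G (es ! 0)" using P(4)[OF l0] by simp
  then obtain f' where f': "f' \<in> C'" "f' \<noteq> es ! 0" "vs ! 0 \<in> ends G f'"
    using nl e0 unfolding noleaf_def by blast
  have "f' \<notin> set es"
  proof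
    assume "f' \<in> set es"
    then obtain m where m: "m < length es" "f' = es ! m" by (auto simp: in_set_conv_nth)
    have "0 = m \<or> 0 = m + 1" using path_edge_at[OF path m(1)] f'(3) m(2) P(1) by auto
    then show False using m f'(2) by auto
  qed
  then have "card (insert f' (set es)) = length es + 1" using distinct_card[OF P(3)] by simp
  moreover have "insert f' (set es) \<subseteq> C'" using all f'(1) by blast
  ultimately show ?thesis using card_mono[OF fin] by metis
qed


lemma count_T:
  assumes "p \<ge> 1"
  shows "card {S. S \<subseteq> {..<k::nat} \<and> S \<noteq> {} \<and> card S \<le> p} \<le> k ^ p"
proof -
  let ?L = "{xs. set xs \<subseteq> {..<k} \<and> length xs = p}"
  have "{S. S \<subseteq> {..<k::nat} \<and> S \<noteq> {} \<and> card S \<le> p} \<subseteq> set ` ?L"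
  proof
    fix S assume S: "S \<in> {S. S \<subseteq> {..<k::nat} \<and> S \<noteq> {} \<and> card S \<le> p}"
    have fS: "finite S" using S finite_subset by blast
    define ys where "ys = sorted_list_of_set S"
    have ys: "set ys = S" "length ys = card S" using fS ys_def by auto
    have "ys \<noteq> []" using ys S by auto
    define xs where "xs = ys @ replicate (p - card S) (hd ys)"
    have "set xs = S" using ys \<open>ys \<noteq> []\<close> unfolding xs_def by auto
    moreover have "length xs = p" using ys S unfolding xs_def by auto
    ultimately show "S \<in> set ` ?L" using S by blast
  qed
  then have "card {S. S \<subseteq> {..<k::nat} \<and> S \<noteq> {} \<and> card S \<le> p} \<le> card (set ` ?L)"
    by (intro card_mono finite_imageI finite_lists_length_eq) auto
  also have "\<dots> \<le> card ?L" by (intro card_image_le finite_lists_length_eq) auto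
  also have "\<dots> = k ^ p" using card_lists_length_eq[of "{..<k}" p] by simp
  finally show ?thesis .
qed

definition arbpP :: "('v, 'e) mgraph \<Rightarrow> nat \<Rightarrow> nat \<Rightarrow> bool" where
  "arbpP G p k \<longleftrightarrow> (\<exists>c :: 'e \<Rightarrow> nat. (\<forall>e\<in>edges G. c e < k) \<and>
     (\<forall>C. is_cycle G C \<longrightarrow> card (c ` C) \<ge> min (card C) (p + 1)))"

lemma arbp_props:
  assumes "mgraph G" shows "arbpP G p (arb_p G p)"
proof -
  have fin: "finite (edges G)" using assms unfolding mgraph_def by simp
  obtain g where g: "bij_betw g (edges G) {0..<card (edges G)}" using ex_bij_betw_finite_nat[OF fin] by blast
  have "arbpP G p (card (edges G))" unfolding arbpP_def
  proof (intro exI[of _ g] conjI allI ballI impI)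
    fix e assume "e \<in> edges G" then show "g e < card (edges G)" using g bij_betw_apply by fastforce
  next
    fix C assume C: "is_cycle G C"
    then have "C \<subseteq> edges G" using cycle_card by blast
    then have "inj_on g C" using g unfolding bij_betw_def by (meson inj_on_subset)
    then show "min (card C) (p + 1) \<le> card (g ` C)" by (simp add: card_image)
  qed
  then show ?thesis unfolding arb_p_def arbpP_def by (rule LeastI)
qed


lemma part1_H:
  assumes G: "mgraph G" and p: "p \<ge> 1" and H: "mgraph H" and sd: "has_subdiv G (p - 1) H"
  shows "arb H \<le> arb_p G p ^ p"
proof -
  define k where "k = arb_p G p"
  obtain c where c: "\<forall>e\<in>edges G. c e < k" "\<forall>C. is_cycle G C \<longrightarrow> card (c ` C) \<ge> min (card C) (p + 1)"
    using arbp_props[OF G, of p] unfolding arbpP_def k_def by blast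
  obtain \<phi> P where h0: "inj_on \<phi> (verts H)" "\<phi> ` verts H \<subseteq> verts G"
     "(\<forall>e\<in>edges H. is_path G (fst (P e)) (snd (P e)) \<and>
        {hd (fst (P e)), last (fst (P e))} = \<phi> ` ends H e \<and>
        length (fst (P e)) \<le> (p - 1) + 2 \<and>
        internal (fst (P e)) \<inter> \<phi> ` verts H = {})"
     "(\<forall>e\<in>edges H. \<forall>f\<in>edges H. e \<noteq> f \<longrightarrow>
        internal (fst (P e)) \<inter> set (fst (P f)) = {} \<and>
        set (snd (P e)) \<inter> set (snd (P f)) = {})"
    using sd unfolding has_subdiv_def by (elim exE conjE) blast
  have ne: "\<And>e. e \<in> edges H \<Longrightarrow> snd (P e) \<noteq> []" using subdiv_ne[OF H h0(1) h0(3)] by blast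
  have pth: "\<And>e. e \<in> edges H \<Longrightarrow> is_path G (fst (P e)) (snd (P e))" using h0(3) by blast
  have hl: "\<And>e. e \<in> edges H \<Longrightarrow> {hd (fst (P e)), last (fst (P e))} = \<phi> ` ends H e" using h0(3) by blast
  have disj: "\<And>e f. e \<in> edges H \<Longrightarrow> f \<in> edges H \<Longrightarrow> e \<noteq> f \<Longrightarrow>
        internal (fst (P e)) \<inter> set (fst (P f)) = {} \<and> set (snd (P e)) \<inter> set (snd (P f)) = {}"
    using h0(4) by blast
  have len: "length (snd (P e)) \<le> p" if e: "e \<in> edges H" for e
  proof -
    have "length (fst (P e)) \<le> (p - 1) + 2" using h0(3) e by blast
    moreover have "length (fst (P e)) = length (snd (P e)) + 1" using pth[OF e] unfolding is_path_def by simp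
    ultimately show ?thesis using p by simp
  qed
  have pathG: "set (snd (P e)) \<subseteq> edges G" if e: "e \<in> edges H" for e
    using pth[OF e] unfolding is_path_def by simp
  define T where "T = {S. S \<subseteq> {..<k} \<and> S \<noteq> {} \<and> card S \<le> p}"
  have finT: "finite T" unfolding T_def
    by (rule finite_subset[of _ "Pow {..<k}"]) auto
  obtain g where g: "bij_betw g T {0..<card T}" using ex_bij_betw_finite_nat[OF finT] by blast
  define Sof where "Sof e = c ` set (snd (P e))" for e
  have Sof_le: "card (Sof e) \<le> length (snd (P e))" for e
    unfolding Sof_def by (meson card_image_le card_length finite_set le_trans)
  have SofT: "Sof e \<in> T" if e: "e \<in> edges H" for e
  proof -
    have "Sof e \<subseteq> {..<k}" using pathG[OF e] c(1) unfolding Sof_def by auto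
    moreover have "Sof e \<noteq> {}" using ne[OF e] unfolding Sof_def by simp
    moreover have "card (Sof e) \<le> p" using Sof_le[of e] len[OF e] by simp
    ultimately show ?thesis unfolding T_def by blast
  qed
  define col where "col e = g (Sof e)" for e
  have "arbP H (k ^ p)" unfolding arbP_def
  proof (intro exI[of _ col] conjI allI ballI notI)
    fix e assume e: "e \<in> edges H"
    have "col e < card T" using bij_betw_apply[OF g SofT[OF e]] unfolding col_def by simp
    also have "card T \<le> k ^ p" unfolding T_def by (rule count_T[OF p])
    finally show "col e < k ^ p" .
  next
    fix i assume "\<exists>C. is_cycle H C \<and> C \<subseteq> {e \<in> edges H. col e = i}"
    then obtain C where C: "is_cycle H C" "C \<subseteq> {e \<in> edges H. col e = i}" by blast
    have CH: "C \<subseteq> edges H" using C(2) by blast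
    have "card C \<ge> 2" "finite C" using cycle_card[OF C(1)] by auto
    then obtain e0 where e0: "e0 \<in> C" by (metis card.empty ex_in_conv not_numeral_le_zero)
    define S where "S = Sof e0"
    have SC: "Sof e = S" if e: "e \<in> C" for e
    proof -
      have "g (Sof e) = g (Sof e0)" using C(2) e e0 unfolding col_def by auto
      then show ?thesis using g SofT CH e e0 unfolding bij_betw_def inj_on_def S_def by blast
    qed
    define U where "U = (\<Union>e\<in>C. set (snd (P e)))"
    have UG: "U \<subseteq> edges G" using pathG CH unfolding U_def by blast
    have "hd (snd (P e0)) \<in> set (snd (P e0))" using ne[of e0] e0 CH by auto
    then have Une: "U \<noteq> {}" using e0 unfolding U_def by blast
    have deg: "f = snd (P e) ! (t - 1) \<or> f = snd (P e) ! t"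
      if e: "e \<in> C" and t: "0 < t" "t < length (snd (P e))" and f: "f \<in> U" "fst (P e) ! t \<in> ends G f"
      for e t f
    proof -
      obtain e' where e': "e' \<in> C" "f \<in> set (snd (P e'))" using f(1) unfolding U_def by blast
      show ?thesis
      proof (cases "e' = e")
        case True
        then obtain m where m: "m < length (snd (P e))" "f = snd (P e) ! m" using e'(2) by (auto simp: in_set_conv_nth)
        have "length (fst (P e)) = length (snd (P e)) + 1" using pth e CH unfolding is_path_def by blast
        moreover have "e \<in> edges H" using e CH by blast
        ultimately have "t = m \<or> t = m + 1" using path_edge_at[OF pth[of e] m(1), of t] f(2) m(2) t by simp
        then show ?thesis using m(2) by auto
      next
        case False
        have "fst (P e) ! t \<in> internal (fst (P e))" using path_internal[OF pth t] e CH by blast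
        moreover have "fst (P e) ! t \<in> set (fst (P e'))" using path_ends_sub[OF pth e'(2)] f(2) e' CH by blast
        ultimately show ?thesis using disj[of e e'] e e' CH False by blast
      qed
    qed
    have nlU: "noleaf G U" unfolding noleaf_def
    proof (intro ballI)
      fix f w assume f: "f \<in> U" and w: "w \<in> ends G f"
      obtain e where e: "e \<in> C" "f \<in> set (snd (P e))" using f unfolding U_def by blast
      have eH: "e \<in> edges H" using e CH by blast
      define es where "es = snd (P e)"
      define vs where "vs = fst (P e)"
      have P: "length vs = length es + 1" "distinct es"
        "\<And>i. i<length es \<Longrightarrow> ends G (es ! i) = {vs ! i, vs ! (i + 1)}"
        using pth[OF eH] unfolding is_path_def es_def vs_def by auto
      obtain m where m: "m < length es" "f = es ! m" using e(2) es_def by (auto simp: in_set_conv_nth)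
      obtain t where t: "t = m \<or> t = m + 1" "w = vs ! t" using P(3)[OF m(1)] w m(2) by auto
      show "\<exists>f'\<in>U. f' \<noteq> f \<and> w \<in> ends G f'"
      proof (cases "0 < t \<and> t < length es")
        case True
        define f' where "f' = (if t = m then es ! (t - 1) else es ! t)"
        have "f' \<in> set es" using True unfolding f'_def by auto
        then have "f' \<in> U" using e(1) es_def unfolding U_def by blast
        moreover have "f' \<noteq> f" using True t(1) m P(2) unfolding f'_def by (auto simp: nth_eq_iff_index_eq)
        moreover have "w \<in> ends G f'" using True t P(3)[of t] P(3)[of "t-1"] unfolding f'_def by auto
        ultimately show ?thesis by blast
      next
        case False
        then have "t = 0 \<or> t = length es" using t(1) m(1) by auto
        moreover have "vs \<noteq> []" using P(1) by auto
        ultimately have "w \<in> {hd vs, last vs}" using t(2) P(1) by (auto simp: hd_conv_nth last_conv_nth)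
        then have "w \<in> \<phi> ` ends H e" using hl[OF eH] vs_def by simp
        then obtain u where u: "u \<in> ends H e" "w = \<phi> u" by blast
        obtain e' where e': "e' \<in> C" "e' \<noteq> e" "u \<in> ends H e'"
          using cycle_noleaf[OF C(1)] e(1) u(1) unfolding noleaf_def by blast
        have e'H: "e' \<in> edges H" using e' CH by blast
        have "w \<in> {hd (fst (P e')), last (fst (P e'))}" using hl[OF e'H] e'(3) u(2) by simp
        then obtain f' where f': "f' \<in> set (snd (P e'))" "w \<in> ends G f'"
          using path_endpoint_edge[OF pth[OF e'H] ne[OF e'H]] by blast
        have "f' \<in> U" using f' e'(1) unfolding U_def by blast
        moreover have "f' \<noteq> f" using disj[OF eH e'H e'(2)[symmetric]] f'(1) e(2) by blast
        ultimately show ?thesis using f'(2) by blast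
      qed
    qed
    obtain C' where C': "is_cycle G C'" "C' \<subseteq> U" using L[OF G UG nlU Une] by blast
    have C'f: "card C' \<ge> 2" "finite C'" using cycle_card[OF C'(1)] by auto
    then obtain f where f: "f \<in> C'" by (metis card.empty ex_in_conv not_numeral_le_zero)
    then obtain e where e: "e \<in> C" "f \<in> set (snd (P e))" using C'(2) unfolding U_def by blast
    have eH: "e \<in> edges H" using e CH by blast
    obtain j where j: "j < length (snd (P e))" "snd (P e) ! j \<in> C'"
      using e(2) f by (metis in_set_conv_nth)
    have big: "length (snd (P e)) + 1 \<le> card C'"
      by (rule propagate[OF pth[OF eH] cycle_noleaf[OF C'(1)] C'(2) C'f(2) deg[OF e(1)] j]) auto
    have cS: "card S \<le> length (snd (P e))" using Sof_le[of e] SC[OF e(1)] by simp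
    have Sp: "card S \<le> p" "finite S" using SofT[OF eH] SC[OF e(1)] finT unfolding T_def
      by (auto intro: finite_subset)
    have "c ` C' \<subseteq> S"
    proof
      fix x assume "x \<in> c ` C'"
      then obtain f' where f': "f' \<in> C'" "x = c f'" by blast
      then obtain e' where "e' \<in> C" "f' \<in> set (snd (P e'))" using C'(2) unfolding U_def by blast
      then show "x \<in> S" using SC f' unfolding Sof_def by blast
    qed
    then have "card (c ` C') \<le> card S" using Sp(2) by (rule card_mono[rotated])
    moreover have "min (card C') (p + 1) \<le> card (c ` C')" using c(2) C'(1) by blast
    ultimately show False using big cS Sp(1) by linarith
  qed
  then show ?thesis unfolding arb_eq k_def by (rule Least_le)
qed


lemma arbset_finite:
  assumes "mgraph G"
  shows "finite {arb H | H :: (nat, nat) mgraph. mgraph H \<and> has_subdiv G k H}"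
proof -
  have "{arb H | H :: (nat, nat) mgraph. mgraph H \<and> has_subdiv G k H} \<subseteq> {..card (edges G)}"
    using arb_props(2) subdiv_cards(1)[OF assms] by fastforce
  then show ?thesis using finite_subset by blast
qed

lemma arbset_ne:
  "{arb H | H :: (nat, nat) mgraph. mgraph H \<and> has_subdiv G k H} \<noteq> {}"
proof -
  define H0 :: "(nat, nat) mgraph" where "H0 = \<lparr>verts = {}, edges = {}, ends = (\<lambda>_. {})\<rparr>"
  have "mgraph H0" unfolding H0_def mgraph_def by simp
  moreover have "has_subdiv G k H0" unfolding H0_def has_subdiv_def by simp
  ultimately show ?thesis by blast
qed

theorem mainTheorem7:
  fixes G :: "('v, 'e) mgraph" and p :: nat
  assumes "mgraph G" and "p \<ge> 1"
  shows "max_arb_subdiv G (p - 1) \<le> arb_p G p ^ p \<and>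
         nabla_m G (p - 1) \<le> real (max_arb_subdiv G (p - 1))"
proof
  show "max_arb_subdiv G (p - 1) \<le> arb_p G p ^ p"
    unfolding max_arb_subdiv_def
  proof (rule Max.boundedI[OF arbset_finite[OF assms(1)] arbset_ne])
    fix a assume "a \<in> {arb H | H :: (nat, nat) mgraph. mgraph H \<and> has_subdiv G (p - 1) H}"
    then obtain H :: "(nat, nat) mgraph" where "a = arb H" "mgraph H" "has_subdiv G (p - 1) H" by blast
    then show "a \<le> arb_p G p ^ p" using part1_H[OF assms(1,2)] by simp
  qed
  show "nabla_m G (p - 1) \<le> real (max_arb_subdiv G (p - 1))" by (rule part2[OF assms(1)])
qed

end
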